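(* In the i.d. model, suppose $\mathbb{E}X_i^\gamma<\infty$ for some $\gamma\ge1$. Then there exists a nondecreasing function $\rho$ such that $$\max\Big(\mathbb{P}\{\mathbb{1}_{\{t\le T_j\}}\ne\mathbb{1}_{\{t\le T_j^{(M)}\}}\},\ \mathbb{P}\{T_j\ne T_j^{(M)},\,T_j^{(M)}\le t\}\Big)\le\rho(t)M^{1-\gamma}$$ for all $t\in(0,1)$, $j\in\mathbb{Z}$, $M\in\mathbb{N}$. Moreover, for every $t<1$ the left-hand side is $o(M^{1-\gamma})$ as $M\to\infty$.
   Context: $(X_i)_{i\in\mathbb{Z}}$ are i.i.d. nonnegative random variables with $\mathbb{E}X_i=1$. For $p,q\ge1$, $j\in\mathbb{Z}$, $s\ge0$ put $F_{p,j,q}(s)=\frac1p\sum_{i=1}^{p-1}(p-i)X_{j+i+1}+\frac1q\sum_{i=1}^{q-1}(q-i)X_{j-i+1}+X_{j+1}-\frac{p+q}{2}s^2$ (empty sums are $0$); this is decreasing in $s\ge0$ and nonnegative at $0$, so $F_{p,j,q}(s)=0$ has a unique root $s\ge0$. Define $T_j:=\inf_{k,l\ge1}\{s\ge0:F_{k,j,l}(s)=0\}$ and $T_j^{(M)}:=\min_{1\le k,l\le M}\{s\ge0:F_{k,j,l}(s)=0\}$ for $M\in\mathbb{N}$. *)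

theory Defs
  imports "HOL-Probability.Probability" "HOL-Library.Landau_Symbols"
begin

text \<open>F_{p,j,q}(s) for a fixed realisation x of the sequence (X_i).\<close>
definition Ffun :: "(int \<Rightarrow> real) \<Rightarrow> nat \<Rightarrow> int \<Rightarrow> nat \<Rightarrow> real \<Rightarrow> real" where
  "Ffun x p j q s =
     (1 / real p) * (\<Sum>i\<in>{1..<p}. real (p - i) * x (j + int i + 1))
   + (1 / real q) * (\<Sum>i\<in>{1..<q}. real (q - i) * x (j - int i + 1))
   + x (j + 1) - (real p + real q) / 2 * s\<^sup>2"

definition Froot :: "(int \<Rightarrow> real) \<Rightarrow> nat \<Rightarrow> int \<Rightarrow> nat \<Rightarrow> real" where
  "Froot x p j q = (THE s. s \<ge> 0 \<and> Ffun x p j q s = 0)"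

definition Tinf :: "(int \<Rightarrow> real) \<Rightarrow> int \<Rightarrow> real" where
  "Tinf x j = Inf {Froot x k j l | k l. k \<ge> 1 \<and> l \<ge> 1}"

definition TM :: "(int \<Rightarrow> real) \<Rightarrow> nat \<Rightarrow> int \<Rightarrow> real" where
  "TM x M j = Min {Froot x k j l | k l. 1 \<le> k \<and> k \<le> M \<and> 1 \<le> l \<and> l \<le> M}"

end

theory Submission
  imports Defs "HOL-Real_Asymp.Real_Asymp"
begin


definition Ssum :: "(int \<Rightarrow> real) \<Rightarrow> nat \<Rightarrow> int \<Rightarrow> nat \<Rightarrow> real" where
  "Ssum x p j q = (1 / real p) * (\<Sum>i\<in>{1..<p}. real (p - i) * x (j + int i + 1))
   + (1 / real q) * (\<Sum>i\<in>{1..<q}. real (q - i) * x (j - int i + 1)) + x (j + 1)"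

lemma Ffun_Ssum: "Ffun x p j q s = Ssum x p j q - (real p + real q) / 2 * s\<^sup>2"
  unfolding Ffun_def Ssum_def by simp

lemma Ssum_nonneg: "(\<And>i. x i \<ge> 0) \<Longrightarrow> Ssum x p j q \<ge> 0"
  unfolding Ssum_def by (intro add_nonneg_nonneg mult_nonneg_nonneg sum_nonneg) auto

lemma Froot_eq:
  assumes "\<And>i. x i \<ge> 0" "p \<ge> 1" "q \<ge> 1"
  shows "Froot x p j q = sqrt (2 * Ssum x p j q / (real p + real q))"
proof -
  have S: "Ssum x p j q \<ge> 0" using Ssum_nonneg assms(1) by blast
  have pq: "real p + real q > 0" using assms by simp
  show ?thesis unfolding Froot_def
  proof (rule the_equality)
    show "0 \<le> sqrt (2 * Ssum x p j q / (real p + real q)) \<and> Ffun x p j q (sqrt (2 * Ssum x p j q / (real p + real q))) = 0"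
      using S pq by (simp add: Ffun_Ssum)
  next
    fix s assume "0 \<le> s \<and> Ffun x p j q s = 0"
    then have s: "s \<ge> 0" "s\<^sup>2 = 2 * Ssum x p j q / (real p + real q)"
      using pq by (auto simp: Ffun_Ssum field_simps)
    then show "s = sqrt (2 * Ssum x p j q / (real p + real q))"
      by (metis real_sqrt_unique)
  qed
qed

lemma gauss_aux: "(\<Sum>i\<in>{1..<p}. real (p - i)) = real p * (real p - 1) / 2"
proof (induction p)
  case 0 then show ?case by simp
next
  case (Suc p)
  have "(\<Sum>i\<in>{1..<Suc p}. real (Suc p - i)) = (\<Sum>i\<in>{1..<Suc p}. real (p - i) + 1)"
    by (intro sum.cong) auto
  also have "\<dots> = (\<Sum>i\<in>{1..<Suc p}. real (p - i)) + p" by (simp add: sum.distrib)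
  also have "(\<Sum>i\<in>{1..<Suc p}. real (p - i)) = (\<Sum>i\<in>{1..<p}. real (p - i))"
    by (cases p) (auto simp: sum.atLeastLessThan_Suc)
  finally show ?case using Suc by (simp add: field_simps)
qed

lemma Ssum_one: "p \<ge> 1 \<Longrightarrow> q \<ge> 1 \<Longrightarrow> Ssum (\<lambda>_. 1) p j q = (real p + real q) / 2"
proof -
  assume "p \<ge> 1" "q \<ge> 1"
  have "Ssum (\<lambda>_. 1) p j q = (1/real p) * (real p*(real p-1)/2) + (1/real q)*(real q*(real q-1)/2) + 1"
    by (simp only: Ssum_def mult_1_right gauss_aux)
  moreover have "(1/real p) * (real p*(real p-1)/2) = (real p - 1)/2" using \<open>p \<ge> 1\<close> by simp
  moreover have "(1/real q) * (real q*(real q-1)/2) = (real q - 1)/2" using \<open>q \<ge> 1\<close> by simp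
  ultimately have "Ssum (\<lambda>_. 1) p j q = (real p - 1)/2 + (real q - 1)/2 + 1" by (simp only:)
  also have "\<dots> = (real p + real q) / 2" by (simp add: field_simps)
  finally show ?thesis .
qed

definition IA :: "nat \<Rightarrow> int \<Rightarrow> int set" where "IA p j = (\<lambda>i. j + int i + 1) ` {1..<p}"
definition IB :: "nat \<Rightarrow> int \<Rightarrow> int set" where "IB q j = (\<lambda>i. j - int i + 1) ` {1..<q}"
definition Iset :: "nat \<Rightarrow> int \<Rightarrow> nat \<Rightarrow> int set" where "Iset p j q = IA p j \<union> IB q j \<union> {j+1}"
definition wt :: "nat \<Rightarrow> int \<Rightarrow> nat \<Rightarrow> int \<Rightarrow> real" where
  "wt p j q n = (if n > j + 1 then real (p - nat (n - j - 1)) / p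
                 else if n < j + 1 then real (q - nat (j + 1 - n)) / q else 1)"

lemma finite_Iset: "finite (Iset p j q)" unfolding Iset_def IA_def IB_def by auto

lemma card_Iset: assumes "p \<ge> 1" "q \<ge> 1" shows "card (Iset p j q) \<le> p + q"
proof -
  have "card (Iset p j q) \<le> card (IA p j) + card (IB q j) + 1"
    unfolding Iset_def using card_Un_le[of "IA p j \<union> IB q j" "{j+1}"] card_Un_le[of "IA p j" "IB q j"] by simp
  moreover have "card (IA p j) \<le> p - 1" unfolding IA_def using card_image_le[of "{1..<p}" "\<lambda>i. j + int i + 1"] by simp
  moreover have "card (IB q j) \<le> q - 1" unfolding IB_def using card_image_le[of "{1..<q}" "\<lambda>i. j - int i + 1"] by simp
  ultimately show ?thesis using assms by linarith
qed

lemma wt_bounds: "p \<ge> 1 \<Longrightarrow> q \<ge> 1 \<Longrightarrow> 0 \<le> wt p j q n \<and> wt p j q n \<le> 1"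
  unfolding wt_def by (auto simp: divide_simps)

lemma Ssum_repr:
  shows "Ssum x p j q = (\<Sum>n\<in>Iset p j q. wt p j q n * x n)"
proof -
  have d1: "IA p j \<inter> IB q j = {}" unfolding IA_def IB_def by auto
  have d2: "(IA p j \<union> IB q j) \<inter> {j+1} = {}" unfolding IA_def IB_def by auto
  have sA: "(\<Sum>n\<in>IA p j. wt p j q n * x n) = (1 / real p) * (\<Sum>i\<in>{1..<p}. real (p - i) * x (j + int i + 1))"
  proof -
    have "(\<Sum>n\<in>IA p j. wt p j q n * x n) = (\<Sum>i\<in>{1..<p}. wt p j q (j + int i + 1) * x (j + int i + 1))"
      unfolding IA_def by (subst sum.reindex) (auto simp: inj_on_def)
    also have "\<dots> = (\<Sum>i\<in>{1..<p}. (1 / real p) * (real (p - i) * x (j + int i + 1)))"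
      by (intro sum.cong) (auto simp: wt_def)
    finally show ?thesis by (simp add: sum_distrib_left)
  qed
  have sB: "(\<Sum>n\<in>IB q j. wt p j q n * x n) = (1 / real q) * (\<Sum>i\<in>{1..<q}. real (q - i) * x (j - int i + 1))"
  proof -
    have "(\<Sum>n\<in>IB q j. wt p j q n * x n) = (\<Sum>i\<in>{1..<q}. wt p j q (j - int i + 1) * x (j - int i + 1))"
      unfolding IB_def by (subst sum.reindex) (auto simp: inj_on_def)
    also have "\<dots> = (\<Sum>i\<in>{1..<q}. (1 / real q) * (real (q - i) * x (j - int i + 1)))"
      by (intro sum.cong) (auto simp: wt_def)
    finally show ?thesis by (simp add: sum_distrib_left)
  qed
  have "(\<Sum>n\<in>Iset p j q. wt p j q n * x n) = (\<Sum>n\<in>IA p j. wt p j q n * x n) + (\<Sum>n\<in>IB q j. wt p j q n * x n) + wt p j q (j+1) * x (j+1)"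
    unfolding Iset_def using d1 d2
    by (subst sum.union_disjoint; (simp add: IA_def IB_def)?)+
  then show ?thesis using sA sB by (simp add: Ssum_def wt_def)
qed



locale iidX = prob_space M for M :: "'a measure" +
  fixes X :: "int \<Rightarrow> 'a \<Rightarrow> real"
  assumes Xmeas[measurable]: "\<And>i. X i \<in> borel_measurable M"
  and Xindep: "indep_vars (\<lambda>_. borel) X UNIV"
  and Xdistr: "\<And>i. distr M borel (X i) = distr M borel (X 0)"
  and Xnn: "\<And>i \<omega>. \<omega> \<in> space M \<Longrightarrow> X i \<omega> \<ge> 0"
  and Xint: "integrable M (X 0)" and Xexp: "expectation (X 0) = 1"
begin

lemma trunc_mean:
  assumes "c < 1"
  shows "\<exists>K::real. K > 0 \<and> expectation (\<lambda>\<omega>. min (X 0 \<omega>) K) > c"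
proof -
  have lim: "(\<lambda>n::nat. expectation (\<lambda>\<omega>. min (X 0 \<omega>) (real n))) \<longlonglongrightarrow> expectation (X 0)"
  proof (rule integral_dominated_convergence[where w = "X 0"])
    show "AE x in M. (\<lambda>i. min (X 0 x) (real i)) \<longlonglongrightarrow> X 0 x"
    proof (rule AE_I2)
      fix x assume "x \<in> space M"
      have "eventually (\<lambda>i. min (X 0 x) (real i) = X 0 x) sequentially"
        using eventually_ge_at_top[of "nat \<lceil>X 0 x\<rceil>"]
        by eventually_elim (smt (verit) le_nat_iff of_nat_le_iff real_nat_ceiling_ge)
      then show "(\<lambda>i. min (X 0 x) (real i)) \<longlonglongrightarrow> X 0 x" by (rule tendsto_eventually)
    qed
    fix i :: nat
    show "AE x in M. norm (min (X 0 x) (real i)) \<le> X 0 x"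
      by (rule AE_I2) (use Xnn[of _ 0] in auto)
  qed (auto simp: Xint)
  then have "eventually (\<lambda>n. expectation (\<lambda>\<omega>. min (X 0 \<omega>) (real n)) > c) sequentially"
    using assms Xexp by (intro order_tendstoD) auto
  moreover have "eventually (\<lambda>n::nat. n \<ge> 1) sequentially" by (rule eventually_ge_at_top)
  ultimately obtain n :: nat where "n \<ge> 1" "expectation (\<lambda>\<omega>. min (X 0 \<omega>) (real n)) > c"
    by (metis (mono_tags, lifting) eventually_at_top_linorder eventually_conj_iff nle_le)
  then show ?thesis by (intro exI[of _ "real n"]) auto
qed

lemma mean_shift: "expectation (\<lambda>\<omega>. min (X n \<omega>) K) = expectation (\<lambda>\<omega>. min (X 0 \<omega>) K)"
proof -
  have "expectation (\<lambda>\<omega>. min (X n \<omega>) K) = integral\<^sup>L (distr M borel (X n)) (\<lambda>x. min x K)"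
    by (rule integral_distr[symmetric]) auto
  also have "\<dots> = integral\<^sup>L (distr M borel (X 0)) (\<lambda>x. min x K)" by (simp add: Xdistr[of n])
  also have "\<dots> = expectation (\<lambda>\<omega>. min (X 0 \<omega>) K)"
    by (rule integral_distr) auto
  finally show ?thesis .
qed

lemma aux_alg: "(y::real) > 0 \<Longrightarrow> K > 0 \<Longrightarrow> 2 * (z * y / 2)\<^sup>2 / (y * K\<^sup>2) = z\<^sup>2 / (2 * K\<^sup>2) * y"
  by (simp add: field_simps power2_eq_square)

lemma root_tail:
  assumes t: "t > 0" and K: "K > 0" and mu: "expectation (\<lambda>\<omega>. min (X 0 \<omega>) K) > t\<^sup>2"
    and kl: "k \<ge> 1" "l \<ge> 1"
  shows "prob {\<omega>\<in>space M. Froot (\<lambda>i. X i \<omega>) k j l < t}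
     \<le> exp (- ((expectation (\<lambda>\<omega>. min (X 0 \<omega>) K) - t\<^sup>2)\<^sup>2 / (2*K\<^sup>2)) * (real k + real l))"
proof -
  define \<mu>K where "\<mu>K = expectation (\<lambda>\<omega>. min (X 0 \<omega>) K)"
  define I where "I = Iset k j l"
  define Z where "Z = (\<lambda>n \<omega>. wt k j l n * min (X n \<omega>) K)"
  define \<mu> where "\<mu> = (\<Sum>n\<in>I. expectation (Z n))"
  have finI: "finite I" by (simp add: I_def finite_Iset)
  interpret H: Hoeffding_ineq M I Z "\<lambda>_. 0" "\<lambda>_. K" \<mu>
  proof unfold_locales
    show "finite I" by (fact finI)
    have "indep_vars (\<lambda>_. borel) (\<lambda>n x. wt k j l n * min (X n x) K) UNIV"
      by (rule indep_vars_compose2[OF Xindep, where Y="\<lambda>n x. wt k j l n * min x K" and N = "\<lambda>_. borel"]) auto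
    then show "indep_vars (\<lambda>_. borel) Z I"
      unfolding Z_def by (rule indep_vars_subset) auto
    fix n assume "n \<in> I"
    show "AE \<omega> in M. Z n \<omega> \<in> {0..K}"
    proof (rule AE_I2)
      fix \<omega> assume "\<omega> \<in> space M"
      then have x: "X n \<omega> \<ge> 0" by (rule Xnn)
      have w: "0 \<le> wt k j l n" "wt k j l n \<le> 1" using wt_bounds[OF kl, of j n] by auto
      have "wt k j l n * min (X n \<omega>) K \<le> 1 * K"
        by (rule mult_mono) (use w x K in auto)
      moreover have "wt k j l n * min (X n \<omega>) K \<ge> 0" using w x K by simp
      ultimately show "Z n \<omega> \<in> {0..K}" by (simp add: Z_def)
    qed
  qed (simp only: \<mu>_def)
  have muval: "\<mu> = \<mu>K * ((real k + real l) / 2)"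
  proof -
    have eZ: "expectation (Z n) = \<mu>K * (wt k j l n * 1)" for n
    proof -
      have "expectation (Z n) = wt k j l n * expectation (\<lambda>\<omega>. min (X n \<omega>) K)" by (simp add: Z_def)
      also have "\<dots> = wt k j l n * \<mu>K" by (simp only: mean_shift[of n] \<mu>K_def)
      finally show ?thesis by simp
    qed
    have "\<mu> = (\<Sum>n\<in>I. \<mu>K * (wt k j l n * 1))"
      unfolding \<mu>_def by (intro sum.cong refl eZ)
    also have "\<dots> = \<mu>K * Ssum (\<lambda>_. 1) k j l"
      by (simp add: Ssum_repr[of "\<lambda>_. 1"] I_def sum_distrib_left)
    finally show ?thesis using Ssum_one[OF kl] by simp
  qed
  define \<epsilon> where "\<epsilon> = (\<mu>K - t\<^sup>2) * (real k + real l) / 2"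
  have eps: "\<epsilon> \<ge> 0" using mu by (simp add: \<epsilon>_def \<mu>K_def)
  have cardI: "card I > 0" "card I \<le> k + l"
    using finI card_Iset[OF kl, of j] by (auto simp: I_def Iset_def card_gt_0_iff)
  have sumK: "(\<Sum>n\<in>I. (K - 0)\<^sup>2) = real (card I) * K\<^sup>2" by simp
  have sumpos: "(\<Sum>n\<in>I. (K - 0)\<^sup>2) > 0" using cardI K by (simp add: sumK)
  have Hb: "prob {\<omega>\<in>space M. (\<Sum>n\<in>I. Z n \<omega>) \<le> \<mu> - \<epsilon>} \<le> exp (-2*\<epsilon>\<^sup>2/(\<Sum>n\<in>I. (K - 0)\<^sup>2))"
    by (rule H.Hoeffding_ineq_le[OF eps sumpos])
  have meas: "{\<omega>\<in>space M. (\<Sum>n\<in>I. Z n \<omega>) \<le> \<mu> - \<epsilon>} \<in> sets M"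
    unfolding Z_def by measurable
  have sub: "{\<omega>\<in>space M. Froot (\<lambda>i. X i \<omega>) k j l < t} \<subseteq> {\<omega>\<in>space M. (\<Sum>n\<in>I. Z n \<omega>) \<le> \<mu> - \<epsilon>}"
  proof safe
    fix \<omega> assume \<omega>: "\<omega> \<in> space M" and lt: "Froot (\<lambda>i. X i \<omega>) k j l < t"
    define S where "S = Ssum (\<lambda>i. X i \<omega>) k j l"
    have S0: "S \<ge> 0" unfolding S_def by (rule Ssum_nonneg) (use Xnn[OF \<omega>] in auto)
    have kl0: "real k + real l > 0" using kl by simp
    have "sqrt (2 * S / (real k + real l)) < sqrt (t\<^sup>2)"
      using lt Froot_eq[of "\<lambda>i. X i \<omega>", OF _ kl] Xnn[OF \<omega>] t by (simp add: S_def)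
    then have "2 * S / (real k + real l) < t\<^sup>2" by (simp only: real_sqrt_less_iff)
    then have St: "S < t\<^sup>2 * ((real k + real l) / 2)" using kl0 by (simp add: field_simps)
    have "(\<Sum>n\<in>I. Z n \<omega>) \<le> (\<Sum>n\<in>I. wt k j l n * X n \<omega>)"
      unfolding Z_def by (intro sum_mono mult_left_mono) (use wt_bounds[OF kl] in auto)
    also have "\<dots> = S" by (simp add: S_def Ssum_repr I_def)
    finally have "(\<Sum>n\<in>I. Z n \<omega>) \<le> S" .
    moreover have "\<mu> - \<epsilon> = t\<^sup>2 * ((real k + real l) / 2)"
      by (simp add: muval \<epsilon>_def field_simps)
    ultimately show "(\<Sum>n\<in>I. Z n \<omega>) \<le> \<mu> - \<epsilon>" using St by simp
  qed
  have "prob {\<omega>\<in>space M. Froot (\<lambda>i. X i \<omega>) k j l < t} \<le> prob {\<omega>\<in>space M. (\<Sum>n\<in>I. Z n \<omega>) \<le> \<mu> - \<epsilon>}"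
    by (rule finite_measure_mono[OF sub meas])
  also note Hb
  also have "exp (-2*\<epsilon>\<^sup>2/(\<Sum>n\<in>I. (K - 0)\<^sup>2)) \<le> exp (- ((\<mu>K - t\<^sup>2)\<^sup>2 / (2*K\<^sup>2)) * (real k + real l))"
  proof -
    have "2*\<epsilon>\<^sup>2/(real (card I) * K\<^sup>2) \<ge> 2*\<epsilon>\<^sup>2/((real k + real l) * K\<^sup>2)"
      using cardI K by (intro divide_left_mono mult_right_mono mult_pos_pos) auto
    moreover have "2*\<epsilon>\<^sup>2/((real k + real l) * K\<^sup>2) = ((\<mu>K - t\<^sup>2)\<^sup>2 / (2*K\<^sup>2)) * (real k + real l)"
      using aux_alg[of "real k + real l" K "\<mu>K - t\<^sup>2"] K kl by (simp add: \<epsilon>_def)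
    ultimately show ?thesis by (simp add: sumK)
  qed
  finally show ?thesis by (simp add: \<mu>K_def)
qed

lemma union_bound:
  assumes "range A \<subseteq> sets M" "\<And>i. measure M (A i) \<le> c * a ^ i" "0 \<le> a" "a < 1"
  shows "measure M (\<Union>i. A i) \<le> c / (1 - a)"
proof -
  have sg: "summable (\<lambda>i. c * a ^ i)" using assms by (intro summable_mult summable_geometric) auto
  have sm: "summable (\<lambda>i. measure M (A i))"
    by (rule summable_comparison_test'[OF sg]) (use assms(2) in auto)
  have "measure M (\<Union>i. A i) \<le> (\<Sum>i. measure M (A i))"
    by (rule finite_measure_subadditive_countably[OF assms(1) sm])
  also have "\<dots> \<le> (\<Sum>i. c * a ^ i)" by (rule suminf_le[OF assms(2) sm sg])
  also have "\<dots> = c / (1 - a)" using assms by (simp add: suminf_mult suminf_geometric divide_simps)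
  finally show ?thesis .
qed

definition Aset :: "real \<Rightarrow> int \<Rightarrow> nat \<Rightarrow> nat \<Rightarrow> 'a set" where
  "Aset t j k l = {\<omega>\<in>space M. Froot (\<lambda>i. X i \<omega>) k j l < t}"

definition Ev :: "real \<Rightarrow> int \<Rightarrow> nat \<Rightarrow> 'a set" where
  "Ev t j m = {\<omega>\<in>space M. \<exists>k l. 1 \<le> k \<and> 1 \<le> l \<and> (m < k \<or> m < l) \<and> Froot (\<lambda>i. X i \<omega>) k j l < t}"

lemma Aset_sets: assumes "k \<ge> 1" "l \<ge> 1" shows "Aset t j k l \<in> sets M"
proof -
  have "Aset t j k l = {\<omega>\<in>space M. sqrt (2 * Ssum (\<lambda>i. X i \<omega>) k j l / (real k + real l)) < t}"
    unfolding Aset_def using Froot_eq[OF _ assms] Xnn by auto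
  also have "\<dots> \<in> sets M" unfolding Ssum_def by measurable
  finally show ?thesis .
qed

lemma Ev_decomp: "Ev t j m = (\<Union>i. \<Union>i'. Aset t j (m + 1 + i) (Suc i')) \<union> (\<Union>i. \<Union>i'. Aset t j (Suc i') (m + 1 + i))"
proof safe
  fix \<omega> assume "\<omega> \<in> Ev t j m" "\<omega> \<notin> (\<Union>i. \<Union>i'. Aset t j (Suc i') (m + 1 + i))"
  then obtain k l where kl: "\<omega> \<in> space M" "1 \<le> k" "1 \<le> l" "m < k \<or> m < l" "Froot (\<lambda>i. X i \<omega>) k j l < t"
    and no: "\<And>i i'. \<omega> \<notin> Aset t j (Suc i') (m + 1 + i)"
    unfolding Ev_def by blast
  show "\<omega> \<in> (\<Union>i. \<Union>i'. Aset t j (m + 1 + i) (Suc i'))"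
  proof (cases "m < l")
    case True
    have "\<omega> \<in> Aset t j (Suc (k - 1)) (m + 1 + (l - m - 1))"
      using kl True by (simp add: Aset_def)
    with no show ?thesis by blast
  next
    case False
    then have "m < k" using kl by auto
    then have "\<omega> \<in> Aset t j (m + 1 + (k - m - 1)) (Suc (l - 1))"
      using kl by (simp add: Aset_def)
    then show ?thesis by blast
  qed
next
  fix \<omega> i i' assume "\<omega> \<in> Aset t j (m + 1 + i) (Suc i')"
  then have "\<omega> \<in> space M \<and> 1 \<le> m+1+i \<and> 1 \<le> Suc i' \<and> (m < m+1+i \<or> m < Suc i') \<and> Froot (\<lambda>i. X i \<omega>) (m+1+i) j (Suc i') < t"
    by (simp add: Aset_def)
  then show "\<omega> \<in> Ev t j m" unfolding Ev_def by blast
next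
  fix \<omega> i i' assume "\<omega> \<in> Aset t j (Suc i') (m + 1 + i)"
  then have "\<omega> \<in> space M \<and> 1 \<le> Suc i' \<and> 1 \<le> m+1+i \<and> (m < Suc i' \<or> m < m+1+i) \<and> Froot (\<lambda>i. X i \<omega>) (Suc i') j (m+1+i) < t"
    by (simp add: Aset_def)
  then show "\<omega> \<in> Ev t j m" unfolding Ev_def by blast
qed

lemma Ev_sets: "Ev t j m \<in> sets M"
  unfolding Ev_decomp by (intro sets.Un) (auto intro!: sets.countable_UN Aset_sets)

lemma Ev_mono: "t \<le> t' \<Longrightarrow> Ev t j m \<subseteq> Ev t' j m"
  unfolding Ev_def by fastforce

lemma Ev_bound_pos:
  assumes "0 < t" "t < 1"
  shows "\<exists>C \<beta>. \<beta> > 0 \<and> (\<forall>j m. measure M (Ev t j m) \<le> C * exp (-\<beta> * real m))"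
proof -
  have "t\<^sup>2 < 1" using assms by (simp add: power_less_one_iff abs_less_iff)
  then obtain K where K: "K > 0" "expectation (\<lambda>\<omega>. min (X 0 \<omega>) K) > t\<^sup>2"
    using trunc_mean by blast
  define \<beta> where "\<beta> = (expectation (\<lambda>\<omega>. min (X 0 \<omega>) K) - t\<^sup>2)\<^sup>2 / (2*K\<^sup>2)"
  have \<beta>: "\<beta> > 0" using K by (simp add: \<beta>_def)
  define a where "a = exp (-\<beta>)"
  have a: "0 \<le> a" "a < 1" using \<beta> by (auto simp: a_def)
  have A: "measure M (Aset t j k l) \<le> a ^ (k + l)" if "k \<ge> 1" "l \<ge> 1" for j k l
  proof -
    have "measure M (Aset t j k l) \<le> exp (- \<beta> * (real k + real l))"
      unfolding Aset_def \<beta>_def by (rule root_tail[OF assms(1) K that])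
    also have "\<dots> = a ^ (k + l)" by (simp add: a_def algebra_simps flip: exp_of_nat_mult)
    finally show ?thesis .
  qed
  have bnd: "measure M (Ev t j m) \<le> 2 / (1 - a)\<^sup>2 * a ^ m" for j m
  proof -
    have U1: "measure M (\<Union>i. \<Union>i'. Aset t j (m + 1 + i) (Suc i')) \<le> a ^ (m + 2) / (1 - a) / (1 - a)"
    proof (rule union_bound[OF _ _ a])
      show "range (\<lambda>i. \<Union>i'. Aset t j (m + 1 + i) (Suc i')) \<subseteq> sets M"
        by (auto intro!: sets.countable_UN Aset_sets)
      fix i
      have "measure M (\<Union>i'. Aset t j (m + 1 + i) (Suc i')) \<le> a ^ (m + 2 + i) / (1 - a)"
      proof (rule union_bound[OF _ _ a])
        show "range (\<lambda>i'. Aset t j (m + 1 + i) (Suc i')) \<subseteq> sets M" by (auto intro!: Aset_sets)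
        fix i'
        show "measure M (Aset t j (m + 1 + i) (Suc i')) \<le> a ^ (m + 2 + i) * a ^ i'"
          using A[of "m + 1 + i" "Suc i'" j] by (simp add: power_add mult_ac)
      qed
      then show "measure M (\<Union>i'. Aset t j (m + 1 + i) (Suc i')) \<le> a ^ (m + 2) / (1 - a) * a ^ i"
        by (simp add: power_add)
    qed
    have U2: "measure M (\<Union>i. \<Union>i'. Aset t j (Suc i') (m + 1 + i)) \<le> a ^ (m + 2) / (1 - a) / (1 - a)"
    proof (rule union_bound[OF _ _ a])
      show "range (\<lambda>i. \<Union>i'. Aset t j (Suc i') (m + 1 + i)) \<subseteq> sets M"
        by (auto intro!: sets.countable_UN Aset_sets)
      fix i
      have "measure M (\<Union>i'. Aset t j (Suc i') (m + 1 + i)) \<le> a ^ (m + 2 + i) / (1 - a)"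
      proof (rule union_bound[OF _ _ a])
        show "range (\<lambda>i'. Aset t j (Suc i') (m + 1 + i)) \<subseteq> sets M" by (auto intro!: Aset_sets)
        fix i'
        show "measure M (Aset t j (Suc i') (m + 1 + i)) \<le> a ^ (m + 2 + i) * a ^ i'"
          using A[of "Suc i'" "m + 1 + i" j] by (simp add: power_add mult_ac)
      qed
      then show "measure M (\<Union>i'. Aset t j (Suc i') (m + 1 + i)) \<le> a ^ (m + 2) / (1 - a) * a ^ i"
        by (simp add: power_add)
    qed
    have "measure M (Ev t j m) \<le> measure M (\<Union>i. \<Union>i'. Aset t j (m + 1 + i) (Suc i')) + measure M (\<Union>i. \<Union>i'. Aset t j (Suc i') (m + 1 + i))"
      unfolding Ev_decomp by (rule measure_Un_le) (auto intro!: sets.countable_UN Aset_sets)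
    also have "\<dots> \<le> 2 * (a ^ (m + 2) / (1 - a) / (1 - a))" using U1 U2 by simp
    also have "\<dots> \<le> 2 / (1 - a)\<^sup>2 * a ^ m"
    proof -
      have "a ^ (m + 2) \<le> a ^ m" using a by (intro power_decreasing) auto
      then show ?thesis using a by (simp add: power2_eq_square divide_simps)
    qed
    finally show ?thesis .
  qed
  show ?thesis
  proof (intro exI conjI allI)
    show "\<beta> > 0" by (fact \<beta>)
    fix j m
    have "a ^ m = exp (- \<beta> * real m)" by (simp add: a_def algebra_simps flip: exp_of_nat_mult)
    then show "measure M (Ev t j m) \<le> 2 / (1 - a)\<^sup>2 * exp (- \<beta> * real m)" using bnd[of j m] by simp
  qed
qed

lemma Ev_bound:
  assumes "t < 1"
  shows "\<exists>C \<beta>. \<beta> > 0 \<and> (\<forall>j m. measure M (Ev t j m) \<le> C * exp (-\<beta> * real m))"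
proof -
  define t' where "t' = max t (1/2)"
  have "0 < t'" "t' < 1" using assms by (auto simp: t'_def)
  from Ev_bound_pos[OF this] obtain C \<beta> where "\<beta> > 0" "\<forall>j m. measure M (Ev t' j m) \<le> C * exp (-\<beta> * real m)"
    by blast
  moreover have "measure M (Ev t j m) \<le> measure M (Ev t' j m)" for j m
    by (intro finite_measure_mono Ev_mono Ev_sets) (simp add: t'_def)
  ultimately show ?thesis by (meson order_trans)
qed

lemma key_incl:
  assumes \<omega>: "\<omega> \<in> space M" and m: "m \<ge> 1"
    and lt: "Tinf (\<lambda>i. X i \<omega>) j < t" "Tinf (\<lambda>i. X i \<omega>) j < TM (\<lambda>i. X i \<omega>) m j"
  shows "\<omega> \<in> Ev t j m"
proof -
  define x where "x = (\<lambda>i. X i \<omega>)"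
  define S where "S = {Froot x k j l | k l. k \<ge> 1 \<and> l \<ge> 1}"
  define B where "B = {Froot x k j l | k l. 1 \<le> k \<and> k \<le> m \<and> 1 \<le> l \<and> l \<le> m}"
  have x0: "\<And>i. x i \<ge> 0" using Xnn[OF \<omega>] by (simp add: x_def)
  have Sne: "S \<noteq> {}" unfolding S_def by blast
  have "Inf S < min t (TM x m j)" using lt by (simp add: Tinf_def S_def x_def)
  then obtain s where "s \<in> S" "s < min t (TM x m j)" using cInf_lessD[OF Sne] by blast
  then obtain k l where kl: "k \<ge> 1" "l \<ge> 1" "Froot x k j l < t" "Froot x k j l < TM x m j"
    unfolding S_def by auto
  have "B = (\<lambda>(k, l). Froot x k j l) ` ({1..m} \<times> {1..m})" unfolding B_def by (auto; blast)
  then have finB: "finite B" by simp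
  have "m < k \<or> m < l"
  proof (rule ccontr)
    assume "\<not> (m < k \<or> m < l)"
    then have "k \<le> m" "l \<le> m" by auto
    then have "Froot x k j l \<in> B" using kl unfolding B_def by blast
    then have "TM x m j \<le> Froot x k j l" unfolding TM_def B_def[symmetric] using finB by (rule Min_le[rotated])
    with kl show False by simp
  qed
  then show ?thesis unfolding Ev_def using \<omega> kl by (auto simp: x_def)
qed

lemma Tinf_le_TM:
  assumes \<omega>: "\<omega> \<in> space M" and m: "m \<ge> 1"
  shows "Tinf (\<lambda>i. X i \<omega>) j \<le> TM (\<lambda>i. X i \<omega>) m j"
proof -
  define x where "x = (\<lambda>i. X i \<omega>)"
  define S where "S = {Froot x k j l | k l. k \<ge> 1 \<and> l \<ge> 1}"
  define B where "B = {Froot x k j l | k l. 1 \<le> k \<and> k \<le> m \<and> 1 \<le> l \<and> l \<le> m}"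
  have x0: "\<And>i. x i \<ge> 0" using Xnn[OF \<omega>] by (simp add: x_def)
  have "B = (\<lambda>(k, l). Froot x k j l) ` ({1..m} \<times> {1..m})" unfolding B_def by (auto; blast)
  then have finB: "finite B" by simp
  have Bne: "B \<noteq> {}" using m unfolding B_def by blast
  have "Min B \<in> B" using finB Bne by (rule Min_in)
  then have "Min B \<in> S" unfolding B_def S_def by blast
  moreover have "bdd_below S"
    unfolding S_def bdd_below_def using Froot_eq[of x, OF x0] Ssum_nonneg[of x, OF x0] by (intro exI[of _ 0]) auto
  ultimately have "Inf S \<le> Min B" by (rule cInf_lower)
  then show ?thesis by (simp add: Tinf_def TM_def S_def B_def x_def)
qed

lemma set1_sub:
  assumes m: "m \<ge> 1"
  shows "{\<omega> \<in> space M. (t \<le> Tinf (\<lambda>i. X i \<omega>) j) \<noteq> (t \<le> TM (\<lambda>i. X i \<omega>) m j)} \<subseteq> Ev t j m"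
proof (intro subsetI)
  fix \<omega> assume "\<omega> \<in> {\<omega> \<in> space M. (t \<le> Tinf (\<lambda>i. X i \<omega>) j) \<noteq> (t \<le> TM (\<lambda>i. X i \<omega>) m j)}"
  then have \<omega>: "\<omega> \<in> space M" and ne: "(t \<le> Tinf (\<lambda>i. X i \<omega>) j) \<noteq> (t \<le> TM (\<lambda>i. X i \<omega>) m j)" by auto
  have le: "Tinf (\<lambda>i. X i \<omega>) j \<le> TM (\<lambda>i. X i \<omega>) m j" by (rule Tinf_le_TM[OF \<omega> m])
  with ne have "Tinf (\<lambda>i. X i \<omega>) j < t" "t \<le> TM (\<lambda>i. X i \<omega>) m j" by auto
  then show "\<omega> \<in> Ev t j m" by (intro key_incl[OF \<omega> m]) auto
qed

lemma set2_sub: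
  assumes m: "m \<ge> 1"
  shows "{\<omega> \<in> space M. Tinf (\<lambda>i. X i \<omega>) j \<noteq> TM (\<lambda>i. X i \<omega>) m j \<and> TM (\<lambda>i. X i \<omega>) m j \<le> t} \<subseteq> Ev t j m"
proof (intro subsetI)
  fix \<omega> assume "\<omega> \<in> {\<omega> \<in> space M. Tinf (\<lambda>i. X i \<omega>) j \<noteq> TM (\<lambda>i. X i \<omega>) m j \<and> TM (\<lambda>i. X i \<omega>) m j \<le> t}"
  then have \<omega>: "\<omega> \<in> space M" and ne: "Tinf (\<lambda>i. X i \<omega>) j \<noteq> TM (\<lambda>i. X i \<omega>) m j" "TM (\<lambda>i. X i \<omega>) m j \<le> t" by auto
  have le: "Tinf (\<lambda>i. X i \<omega>) j \<le> TM (\<lambda>i. X i \<omega>) m j" by (rule Tinf_le_TM[OF \<omega> m])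
  with ne have "Tinf (\<lambda>i. X i \<omega>) j < TM (\<lambda>i. X i \<omega>) m j" by auto
  then show "\<omega> \<in> Ev t j m" using ne by (intro key_incl[OF \<omega> m]) auto
qed

lemma max_le_Ev:
  assumes "m \<ge> 1"
  shows "max (measure M {\<omega> \<in> space M. (t \<le> Tinf (\<lambda>i. X i \<omega>) j) \<noteq> (t \<le> TM (\<lambda>i. X i \<omega>) m j)})
             (measure M {\<omega> \<in> space M. Tinf (\<lambda>i. X i \<omega>) j \<noteq> TM (\<lambda>i. X i \<omega>) m j \<and> TM (\<lambda>i. X i \<omega>) m j \<le> t})
         \<le> measure M (Ev t j m)"
  using finite_measure_mono[OF set1_sub[OF assms] Ev_sets] finite_measure_mono[OF set2_sub[OF assms] Ev_sets]
  by simp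

end

theorem lemma1:
  fixes M :: "'a measure" and X :: "int \<Rightarrow> 'a \<Rightarrow> real" and \<gamma> :: real
  assumes "prob_space M"
    and "\<And>i. X i \<in> borel_measurable M"
    and "prob_space.indep_vars M (\<lambda>_. borel) X UNIV"
    and "\<And>i. distr M borel (X i) = distr M borel (X 0)"
    and "\<And>i \<omega>. \<omega> \<in> space M \<Longrightarrow> X i \<omega> \<ge> 0"
    and "integrable M (X 0)" and "prob_space.expectation M (X 0) = 1"
    and "\<gamma> \<ge> 1"
    and "integrable M (\<lambda>\<omega>. X 0 \<omega> powr \<gamma>)"
  shows "(\<exists>\<rho> :: real \<Rightarrow> real. mono_on {0<..<1} \<rho> \<and>
            (\<forall>t\<in>{0<..<1}. \<forall>j::int. \<forall>m::nat. m \<ge> 1 \<longrightarrow>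
               max (measure M {\<omega> \<in> space M. (t \<le> Tinf (\<lambda>i. X i \<omega>) j) \<noteq> (t \<le> TM (\<lambda>i. X i \<omega>) m j)})
                   (measure M {\<omega> \<in> space M. Tinf (\<lambda>i. X i \<omega>) j \<noteq> TM (\<lambda>i. X i \<omega>) m j
                                              \<and> TM (\<lambda>i. X i \<omega>) m j \<le> t})
               \<le> \<rho> t * real m powr (1 - \<gamma>)))
       \<and> (\<forall>t < 1. \<forall>j::int.
            (\<lambda>m::nat. max (measure M {\<omega> \<in> space M. (t \<le> Tinf (\<lambda>i. X i \<omega>) j) \<noteq> (t \<le> TM (\<lambda>i. X i \<omega>) m j)})
                   (measure M {\<omega> \<in> space M. Tinf (\<lambda>i. X i \<omega>) j \<noteq> TM (\<lambda>i. X i \<omega>) m j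
                                              \<and> TM (\<lambda>i. X i \<omega>) m j \<le> t}))
            \<in> o(\<lambda>m. real m powr (1 - \<gamma>)))"
proof -
  interpret iidX M X
    unfolding iidX_def iidX_axioms_def using assms by auto
  have asym1: "(\<lambda>m::nat. exp (-\<beta> * real m) * real m powr (\<gamma> - 1)) \<longlonglongrightarrow> 0" if "\<beta> > 0" for \<beta>
    using that by real_asymp
  have asym2: "(\<lambda>m::nat. exp (-\<beta> * real m)) \<in> o(\<lambda>m. real m powr (1 - \<gamma>))" if "\<beta> > 0" for \<beta>
    using that by real_asymp
  define P where "P t j m = max (measure M {\<omega> \<in> space M. (t \<le> Tinf (\<lambda>i. X i \<omega>) j) \<noteq> (t \<le> TM (\<lambda>i. X i \<omega>) m j)})
                   (measure M {\<omega> \<in> space M. Tinf (\<lambda>i. X i \<omega>) j \<noteq> TM (\<lambda>i. X i \<omega>) m j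
                                              \<and> TM (\<lambda>i. X i \<omega>) m j \<le> t})" for t j m
  have PEv: "P t j m \<le> measure M (Ev t j m)" if "m \<ge> 1" for t j m
    unfolding P_def by (rule max_le_Ev[OF that])
  define f where "f t p = measure M (Ev t (fst p) (snd p)) * real (snd p) powr (\<gamma> - 1)" for t p
  define A :: "(int \<times> nat) set" where "A = UNIV \<times> {1..}"
  define \<rho> where "\<rho> t = (SUP p\<in>A. f t p)" for t
  have bdd: "bdd_above (f t ` A)" if t1: "t < 1" for t
  proof -
    obtain C \<beta> where \<beta>: "\<beta> > 0" and C: "\<And>j m. measure M (Ev t j m) \<le> C * exp (-\<beta> * real m)"
      using Ev_bound[OF t1] by blast
    have "measure M (Ev t 0 0) \<le> C" using C[of 0 0] by simp
    then have C0: "C \<ge> 0" using measure_nonneg[of M "Ev t 0 0"] by (rule order_trans[rotated])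
    have "Bseq (\<lambda>m::nat. exp (-\<beta> * real m) * real m powr (\<gamma> - 1))"
      using asym1[OF \<beta>] by (rule convergent_imp_Bseq[OF convergentI])
    then obtain B where B: "\<And>m::nat. norm (exp (-\<beta> * real m) * real m powr (\<gamma> - 1)) \<le> B"
      unfolding Bseq_def by blast
    show ?thesis unfolding bdd_above_def
    proof (intro exI ballI)
      fix y assume "y \<in> f t ` A"
      then obtain j m where y: "y = f t (j, m)" by auto
      have "y \<le> C * exp (-\<beta> * real m) * real m powr (\<gamma> - 1)"
        unfolding y f_def using C[of j m] by (simp add: mult_right_mono)
      also have "\<dots> = C * (exp (-\<beta> * real m) * real m powr (\<gamma> - 1))" by simp
      also have "\<dots> \<le> C * B" using B[of m] C0 by (intro mult_left_mono) auto
      finally show "y \<le> C * B" .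
    qed
  qed
  have part1: "mono_on {0<..<1} \<rho> \<and>
            (\<forall>t\<in>{0<..<1}. \<forall>j::int. \<forall>m::nat. m \<ge> 1 \<longrightarrow> P t j m \<le> \<rho> t * real m powr (1 - \<gamma>))"
  proof (intro conjI mono_onI ballI allI impI)
    fix s t :: real assume st: "s \<in> {0<..<1}" "t \<in> {0<..<1}" "s \<le> t"
    show "\<rho> s \<le> \<rho> t" unfolding \<rho>_def
    proof (rule cSUP_mono)
      show "A \<noteq> {}" by (auto simp: A_def)
      show "bdd_above (f t ` A)" using st by (intro bdd) auto
      fix p assume "p \<in> A"
      have "measure M (Ev s (fst p) (snd p)) \<le> measure M (Ev t (fst p) (snd p))"
        by (intro finite_measure_mono Ev_mono Ev_sets st)
      then have "f s p \<le> f t p" unfolding f_def by (intro mult_right_mono) auto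
      then show "\<exists>q\<in>A. f s p \<le> f t q" using \<open>p \<in> A\<close> by blast
    qed
  next
    fix t :: real and j :: int and m :: nat assume t: "t \<in> {0<..<1}" and m: "m \<ge> 1"
    have mpos: "real m > 0" using m by simp
    have "P t j m \<le> measure M (Ev t j m)" by (rule PEv[OF m])
    also have "\<dots> = f t (j, m) * real m powr (1 - \<gamma>)"
      using mpos by (simp add: f_def powr_add[symmetric])
    also have "\<dots> \<le> \<rho> t * real m powr (1 - \<gamma>)"
      unfolding \<rho>_def using t m by (intro mult_right_mono cSUP_upper bdd) (auto simp: A_def)
    finally show "P t j m \<le> \<rho> t * real m powr (1 - \<gamma>)" .
  qed
  have part2: "(\<lambda>m::nat. P t j m) \<in> o(\<lambda>m. real m powr (1 - \<gamma>))" if t1: "t < 1" for t j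
  proof -
    obtain C \<beta> where \<beta>: "\<beta> > 0" and C: "\<And>j m. measure M (Ev t j m) \<le> C * exp (-\<beta> * real m)"
      using Ev_bound[OF t1] by blast
    have "(\<lambda>m::nat. P t j m) \<in> O(\<lambda>m. exp (-\<beta> * real m))"
    proof (rule bigoI)
      show "eventually (\<lambda>m. norm (P t j m) \<le> C * norm (exp (-\<beta> * real m))) sequentially"
        using eventually_ge_at_top[of "1::nat"]
      proof eventually_elim
        case (elim m)
        have "0 \<le> P t j m" unfolding P_def by (simp add: le_max_iff_disj)
        then show ?case using PEv[OF elim, of t j] C[of j m] by simp
      qed
    qed
    then show ?thesis using asym2[OF \<beta>] by (rule landau_o.big_small_trans)
  qed
  show ?thesis using part1 part2 unfolding P_def by blast
qed

end
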